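(* Let $A$ be the weighted shift on $\mathcal{H}$ with weights $\{1/n\}_{n\ge1}$. Then for every $r\ge0$, \[\lim_{z\to0}\frac{\ln\|(z-rA)^{-1}\|}{\ln\|(z-A)^{-1}\|}=r.\]
   Context: $\mathcal{H}$ is a separable infinite-dimensional complex Hilbert space with orthonormal basis $\{e_n\}_{n=0}^\infty$, and $A$ is defined by $Ae_n=\frac{1}{n+1}e_{n+1}$ for $n\ge0$. $A$ is quasinilpotent, and $z$ ranges over nonzero complex numbers. *)

theory Defs
  imports "HOL-Analysis.Analysis"
begin

text \<open>Concrete model of the separable infinite-dimensional Hilbert space:
  l2(N) = square-summable complex sequences, with e_n the n-th unit sequence.\<close>

definition l2 :: "(nat \<Rightarrow> complex) set" where
  "l2 = {x. summable (\<lambda>n. (cmod (x n))\<^sup>2)}"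

definition l2norm :: "(nat \<Rightarrow> complex) \<Rightarrow> real" where
  "l2norm x = sqrt (\<Sum>n. (cmod (x n))\<^sup>2)"

text \<open>Weighted shift A e_n = e_(n+1) / (n+1), i.e. (A x)_0 = 0, (A x)_m = x_(m-1) / m.\<close>

definition shiftA :: "(nat \<Rightarrow> complex) \<Rightarrow> (nat \<Rightarrow> complex)" where
  "shiftA x = (\<lambda>m. if m = 0 then 0 else x (m - 1) / of_nat m)"

definition opnorm :: "((nat \<Rightarrow> complex) \<Rightarrow> (nat \<Rightarrow> complex)) \<Rightarrow> real" where
  "opnorm T = Sup {l2norm (T x) | x. x \<in> l2 \<and> l2norm x \<le> 1}"

definition zminusrA :: "complex \<Rightarrow> real \<Rightarrow> (nat \<Rightarrow> complex) \<Rightarrow> (nat \<Rightarrow> complex)" where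
  "zminusrA z r x = (\<lambda>n. z * x n - of_real r * shiftA x n)"

definition resolvent :: "complex \<Rightarrow> real \<Rightarrow> (nat \<Rightarrow> complex) \<Rightarrow> (nat \<Rightarrow> complex)" where
  "resolvent z r = inv_into l2 (zminusrA z r)"

end

theory Submission
  imports Defs "HOL-Real_Asymp.Real_Asymp"
begin

fun solx :: "complex \<Rightarrow> real \<Rightarrow> (nat \<Rightarrow> complex) \<Rightarrow> nat \<Rightarrow> complex" where
  "solx z r y 0 = y 0 / z"
| "solx z r y (Suc n) = (y (Suc n) + of_real r * solx z r y n / of_nat (Suc n)) / z"

lemma zminus_solx: assumes "z \<noteq> 0" shows "zminusrA z r (solx z r y) = y"
proof
  fix n show "zminusrA z r (solx z r y) n = y n"
    using assms by (cases n) (auto simp: zminusrA_def shiftA_def field_simps)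
qed

lemma solx_unique: assumes "z \<noteq> 0" "zminusrA z r x = y" shows "x = solx z r y"
proof
  fix n show "x n = solx z r y n"
  proof (induction n)
    case 0
    have "zminusrA z r x 0 = y 0" using assms(2) by simp
    then show ?case using assms(1) by (simp add: zminusrA_def shiftA_def field_simps)
  next
    case (Suc n)
    have "zminusrA z r x (Suc n) = y (Suc n)" using assms(2) by simp
    then have "z * x (Suc n) - of_real r * (x n / of_nat (Suc n)) = y (Suc n)"
      by (simp add: zminusrA_def shiftA_def)
    then have "x (Suc n) = (y (Suc n) + of_real r * x n / of_nat (Suc n)) / z"
      using assms(1) by (simp add: field_simps)
    then show ?case using Suc by simp
  qed
qed

lemma resolvent_eq: assumes "z \<noteq> 0" "solx z r y \<in> l2" shows "resolvent z r y = solx z r y"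
proof -
  have inj: "inj_on (zminusrA z r) l2"
    by (rule inj_onI) (metis solx_unique assms(1))
  show ?thesis
    unfolding resolvent_def using inv_into_f_f[OF inj assms(2)] zminus_solx[OF assms(1)] by simp
qed

lemma solx_bound: assumes "z \<noteq> 0" "r \<ge> 0"
  shows "cmod (solx z r y n) \<le> (\<Sum>k\<le>n. ((r / cmod z)^k / fact k / cmod z) * cmod (y (n - k)))"
proof (induction n)
  case 0 then show ?case by (simp add: norm_divide)
next
  case (Suc n)
  define u where "u = cmod z"
  define c where "c = (\<lambda>k. (r / u)^k / fact k / u)"
  have u: "u > 0" using assms u_def by simp
  have IH: "cmod (solx z r y n) \<le> (\<Sum>k\<le>n. c k * cmod (y (n - k)))"
    using Suc c_def u_def by simp
  have "cmod (solx z r y (Suc n)) \<le> (cmod (y (Suc n)) + r / (Suc n) * cmod (solx z r y n)) / u"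
  proof -
    have "cmod (y (Suc n) + of_real r * solx z r y n / of_nat (Suc n))
        \<le> cmod (y (Suc n)) + cmod (of_real r * solx z r y n / of_nat (Suc n))"
      by (rule norm_triangle_ineq)
    also have "cmod (of_real r * solx z r y n / of_nat (Suc n)) = r / (Suc n) * cmod (solx z r y n)"
      using assms(2) by (simp add: norm_divide norm_mult del: of_nat_Suc)
    finally show ?thesis using u by (simp add: norm_divide u_def divide_right_mono)
  qed
  also have "\<dots> \<le> (cmod (y (Suc n)) + r / (Suc n) * (\<Sum>k\<le>n. c k * cmod (y (n-k)))) / u"
    using IH u assms(2) by (intro divide_right_mono add_left_mono mult_left_mono) auto
  also have "\<dots> = c 0 * cmod (y (Suc n)) + (\<Sum>k\<le>n. (r / (Suc n) / u * c k) * cmod (y (n-k)))"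
    using u by (simp add: c_def sum_distrib_left sum_divide_distrib add_divide_distrib mult_ac)
  also have "\<dots> \<le> c 0 * cmod (y (Suc n)) + (\<Sum>k\<le>n. c (Suc k) * cmod (y (n-k)))"
  proof -
    have "r / (Suc n) / u * c k \<le> c (Suc k)" if "k \<le> n" for k
    proof -
      have "c (Suc k) = (r / u) / (Suc k) * c k" using u by (simp add: c_def field_simps)
      moreover have "r / (Suc n) / u \<le> (r / u) / (Suc k)"
        using that u assms(2) by (simp add: divide_divide_eq_left) (intro divide_left_mono mult_left_mono mult_pos_pos, auto)
      moreover have "c k \<ge> 0" using u assms(2) by (simp add: c_def)
      ultimately show ?thesis by (metis mult_right_mono)
    qed
    then show ?thesis by (intro add_left_mono sum_mono mult_right_mono) auto
  qed
  also have "\<dots> = (\<Sum>k\<le>Suc n. c k * cmod (y (Suc n - k)))"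
    by (subst sum.atMost_Suc_shift) simp
  finally show ?case by (simp add: c_def u_def)
qed

lemma wcs:
  fixes c b :: "nat \<Rightarrow> real"
  assumes "\<And>k. c k \<ge> 0"
  shows "(\<Sum>k\<in>I. c k * b k)^2 \<le> (\<Sum>k\<in>I. c k) * (\<Sum>k\<in>I. c k * (b k)^2)"
proof -
  have "(\<Sum>k\<in>I. c k * b k)^2 = (\<Sum>k\<in>I. sqrt (c k) * (sqrt (c k) * b k))^2"
    using assms by (simp add: mult.assoc[symmetric])
  also have "\<dots> \<le> (\<Sum>k\<in>I. (sqrt (c k))^2) * (\<Sum>k\<in>I. (sqrt (c k) * b k)^2)"
    by (rule Cauchy_Schwarz_ineq_sum)
  also have "\<dots> = (\<Sum>k\<in>I. c k) * (\<Sum>k\<in>I. c k * (b k)^2)"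
    using assms by (simp add: power_mult_distrib)
  finally show ?thesis .
qed

lemma young:
  fixes a b c :: "nat \<Rightarrow> real"
  assumes c0: "\<And>k. c k \<ge> 0" and b0: "\<And>k. b k \<ge> 0" and a0: "\<And>n. a n \<ge> 0"
  and cs: "summable c" and bs: "summable (\<lambda>k. (b k)^2)"
  and ab: "\<And>n. a n \<le> (\<Sum>k\<le>n. c k * b (n-k))"
  shows "summable (\<lambda>n. (a n)^2) \<and> (\<Sum>n. (a n)^2) \<le> (suminf c)^2 * (\<Sum>k. (b k)^2)"
proof -
  define C where "C = suminf c"
  have C0: "C \<ge> 0" unfolding C_def using cs c0 by (rule suminf_nonneg)
  have an: "(a n)^2 \<le> C * (\<Sum>k\<le>n. c k * (b (n-k))^2)" for n
  proof -
    have "(a n)^2 \<le> (\<Sum>k\<le>n. c k * b (n-k))^2"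
      using a0 ab by (intro power_mono) auto
    also have "\<dots> \<le> (\<Sum>k\<le>n. c k) * (\<Sum>k\<le>n. c k * (b (n-k))^2)"
      using c0 by (rule wcs)
    also have "\<dots> \<le> C * (\<Sum>k\<le>n. c k * (b (n-k))^2)"
      unfolding C_def using cs c0
      by (intro mult_right_mono sum_le_suminf sum_nonneg mult_nonneg_nonneg) auto
    finally show ?thesis .
  qed
  have n1: "summable (\<lambda>k. norm (c k))" using cs c0 by simp
  have n2: "summable (\<lambda>k. norm ((b k)^2))" using bs by simp
  have sP: "summable (\<lambda>n. \<Sum>k\<le>n. c k * (b (n-k))^2)"
    using summable_Cauchy_product[OF n1 n2] by simp
  have eP: "(\<Sum>n. \<Sum>k\<le>n. c k * (b (n-k))^2) = C * (\<Sum>k. (b k)^2)"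
    using Cauchy_product[OF n1 n2] by (simp add: C_def)
  have sCP: "summable (\<lambda>n. C * (\<Sum>k\<le>n. c k * (b (n-k))^2))"
    using sP by (rule summable_mult)
  have sa: "summable (\<lambda>n. (a n)^2)"
    by (rule summable_comparison_test[OF _ sCP]) (use an in auto)
  have "(\<Sum>n. (a n)^2) \<le> (\<Sum>n. C * (\<Sum>k\<le>n. c k * (b (n-k))^2))"
    by (rule suminf_le[OF an sa sCP])
  also have "\<dots> = C * (C * (\<Sum>k. (b k)^2))"
    using suminf_mult[OF sP, of C] eP by simp
  finally show ?thesis using sa by (simp add: C_def power2_eq_square)
qed

lemma exp_sums_c:
  fixes r u :: real
  assumes "u > 0"
  shows "(\<lambda>k. (r / u)^k / fact k / u) sums (exp (r / u) / u)"
proof -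
  have "(\<lambda>k. (r / u)^k / fact k) sums exp (r / u)"
  proof -
    have "(\<lambda>n. (r / u) ^ n /\<^sub>R fact n) = (\<lambda>k. (r / u)^k / fact k)"
      by (rule ext) (simp add: field_simps)
    then show ?thesis using exp_converges[of "r / u"] by simp
  qed
  then show ?thesis by (rule sums_divide)
qed

lemma solx_l2:
  assumes "z \<noteq> 0" "r \<ge> 0" "y \<in> l2"
  shows "solx z r y \<in> l2 \<and> l2norm (solx z r y) \<le> exp (r / cmod z) / cmod z * l2norm y"
proof -
  define u where "u = cmod z"
  have u: "u > 0" using assms u_def by simp
  define c where "c = (\<lambda>k. (r / u)^k / fact k / u)"
  have cs: "c sums (exp (r / u) / u)" unfolding c_def by (rule exp_sums_c[OF u])
  have bs: "summable (\<lambda>k. (cmod (y k))^2)" using assms(3) by (simp add: l2_def)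
  have Y: "summable (\<lambda>n. (cmod (solx z r y n))^2) \<and>
      (\<Sum>n. (cmod (solx z r y n))^2) \<le> (suminf c)^2 * (\<Sum>k. (cmod (y k))^2)"
    apply (rule young[OF _ _ _ _ bs])
    using cs u assms(2) solx_bound[OF assms(1,2)] by (auto simp: c_def u_def sums_iff)
  have "l2norm (solx z r y) \<le> sqrt ((suminf c)^2 * (\<Sum>k. (cmod (y k))^2))"
    unfolding l2norm_def using Y by (rule real_sqrt_le_mono[OF conjunct2])
  also have "\<dots> = exp (r / u) / u * l2norm y"
    using cs u by (simp add: l2norm_def real_sqrt_mult sums_iff)
  finally show ?thesis using Y by (simp add: l2_def u_def)
qed

lemma opnorm_upper:
  assumes "z \<noteq> 0" "r \<ge> 0"
  shows "bdd_above {l2norm (resolvent z r x) | x. x \<in> l2 \<and> l2norm x \<le> 1}"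
    and "opnorm (resolvent z r) \<le> exp (r / cmod z) / cmod z"
proof -
  define S where "S = {l2norm (resolvent z r x) | x. x \<in> l2 \<and> l2norm x \<le> 1}"
  have le: "s \<le> exp (r / cmod z) / cmod z" if sS: "s \<in> S" for s
  proof -
    obtain x where x: "s = l2norm (resolvent z r x)" "x \<in> l2" "l2norm x \<le> 1"
      using sS S_def by auto
    have L: "solx z r x \<in> l2 \<and> l2norm (solx z r x) \<le> exp (r / cmod z) / cmod z * l2norm x"
      by (rule solx_l2[OF assms x(2)])
    have "s = l2norm (solx z r x)" using x(1) resolvent_eq[OF assms(1)] L by simp
    also have "\<dots> \<le> exp (r / cmod z) / cmod z * l2norm x" using L by simp
    also have "\<dots> \<le> exp (r / cmod z) / cmod z * 1"
      using x(3) assms(1) by (intro mult_left_mono) auto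
    finally show ?thesis by simp
  qed
  have ne: "S \<noteq> {}"
  proof -
    have "(\<lambda>_. 0) \<in> l2" by (simp add: l2_def)
    moreover have "l2norm (\<lambda>_::nat. 0::complex) \<le> 1" by (simp add: l2norm_def)
    ultimately show ?thesis unfolding S_def by blast
  qed
  show "bdd_above {l2norm (resolvent z r x) | x. x \<in> l2 \<and> l2norm x \<le> 1}"
    using le unfolding S_def bdd_above_def by blast
  show "opnorm (resolvent z r) \<le> exp (r / cmod z) / cmod z"
    unfolding opnorm_def S_def[symmetric] using ne le by (rule cSup_least)
qed

definition e0 :: "nat \<Rightarrow> complex" where "e0 = (\<lambda>n. if n = 0 then 1 else 0)"

lemma e0_l2: "e0 \<in> l2" "l2norm e0 = 1"
proof -
  have "(\<lambda>n. (cmod (e0 n))^2) = (\<lambda>n. if n = 0 then 1 else 0)"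
    by (rule ext) (simp add: e0_def)
  moreover have "(\<lambda>n::nat. if n = 0 then (1::real) else 0) sums 1"
    using sums_single[of 0 "\<lambda>_. 1::real"] by simp
  ultimately have "(\<lambda>n. (cmod (e0 n))^2) sums 1" by simp
  then show "e0 \<in> l2" "l2norm e0 = 1" by (auto simp: l2_def l2norm_def sums_iff)
qed

lemma solx_e0: assumes "z \<noteq> 0"
  shows "solx z r e0 k = of_real r ^ k / (fact k * z ^ (k + 1))"
proof (induction k)
  case 0 then show ?case by (simp add: e0_def)
next
  case (Suc k)
  have "solx z r e0 (Suc k) = (of_real r * solx z r e0 k / of_nat (Suc k)) / z"
    by (simp add: e0_def)
  also have "\<dots> = (of_real r * (of_real r ^ k / (fact k * z ^ (k + 1))) / of_nat (Suc k)) / z"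
    by (simp only: Suc.IH)
  also have "\<dots> = of_real r ^ Suc k / (fact (Suc k) * z ^ (Suc k + 1))"
    using assms by (simp add: field_simps del: of_nat_Suc)
  finally show ?case .
qed

lemma opnorm_lower:
  assumes "z \<noteq> 0" "r \<ge> 0"
  shows "(r / cmod z)^k / fact k / cmod z \<le> opnorm (resolvent z r)"
proof -
  have L: "solx z r e0 \<in> l2 \<and> l2norm (solx z r e0) \<le> exp (r / cmod z) / cmod z * l2norm e0"
    by (rule solx_l2[OF assms e0_l2(1)])
  have R: "resolvent z r e0 = solx z r e0" using resolvent_eq[OF assms(1)] L by simp
  have "(r / cmod z)^k / fact k / cmod z = cmod (solx z r e0 k)"
    using assms by (simp add: solx_e0 norm_divide norm_mult norm_power power_divide field_simps)
  also have "\<dots> = sqrt (\<Sum>n\<in>{k}. (cmod (solx z r e0 n))^2)" by simp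
  also have "\<dots> \<le> l2norm (solx z r e0)"
    unfolding l2norm_def using L
    by (intro real_sqrt_le_mono sum_le_suminf) (auto simp: l2_def)
  also have "\<dots> \<le> opnorm (resolvent z r)"
  proof -
    have "l2norm (solx z r e0) \<in> {l2norm (resolvent z r x) | x. x \<in> l2 \<and> l2norm x \<le> 1}"
      using e0_l2 R by (intro CollectI exI[of _ e0]) simp
    then show ?thesis
      unfolding opnorm_def by (intro cSup_upper opnorm_upper(1)[OF assms])
  qed
  finally show ?thesis .
qed

lemma exists_big:
  fixes t q :: real
  assumes "t \<ge> 0" "0 < q" "q < 1"
  shows "\<exists>k. (1 - q) * exp (q * t) \<le> t^k / fact k"
proof (rule ccontr)
  assume "\<not> ?thesis"
  then have lt: "t^k / fact k < (1 - q) * exp (q * t)" for k using not_le by blast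
  define f where "f = (\<lambda>k. q^k * (t^k / fact k))"
  define g where "g = (\<lambda>k. q^k * ((1 - q) * exp (q * t)))"
  have fs: "f sums exp (q * t)"
  proof -
    have "(\<lambda>n. (q * t) ^ n /\<^sub>R fact n) = f"
      by (rule ext) (simp add: f_def field_simps power_mult_distrib)
    then show ?thesis using exp_converges[of "q * t"] by simp
  qed
  have gs: "g sums exp (q * t)"
  proof -
    have "(\<lambda>k. q^k) sums (1 / (1 - q))" using geometric_sums[of q] assms by simp
    then have "(\<lambda>k. q^k * ((1 - q) * exp (q * t))) sums (1 / (1 - q) * ((1 - q) * exp (q * t)))"
      by (rule sums_mult2)
    then show ?thesis using assms by (simp add: g_def)
  qed
  have d: "(\<lambda>k. g k - f k) sums (exp (q * t) - exp (q * t))"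
    by (rule sums_diff[OF gs fs])
  have "0 < (\<Sum>k. g k - f k)"
  proof (rule suminf_pos2[where i=0])
    show "summable (\<lambda>k. g k - f k)" using d by (simp add: sums_iff)
    show "0 \<le> g k - f k" for k
    proof -
      have "q^k * (t^k / fact k) \<le> q^k * ((1 - q) * exp (q * t))"
        using lt[of k] assms by (intro mult_left_mono) auto
      then show ?thesis by (simp add: f_def g_def)
    qed
    show "0 < g 0 - f 0" using lt[of 0] by (simp add: f_def g_def)
  qed
  then show False using d by (simp add: sums_iff)
qed

lemma key_bounds:
  assumes "z \<noteq> 0" "cmod z < 1" "r \<ge> 0"
  shows "(1 - sqrt (cmod z)) * r - cmod z / 2 * ln (cmod z) \<le> cmod z * ln (opnorm (resolvent z r))"
    and "cmod z * ln (opnorm (resolvent z r)) \<le> r - cmod z * ln (cmod z)"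
proof -
  define u where "u = cmod z"
  have u: "0 < u" "u < 1" using assms u_def by auto
  have q: "0 < 1 - sqrt u" "1 - sqrt u < 1" using u by (auto simp: real_sqrt_lt_1_iff)
  obtain k where k: "(1 - (1 - sqrt u)) * exp ((1 - sqrt u) * (r / u)) \<le> (r / u)^k / fact k"
    using exists_big[OF _ q, of "r / u"] u assms(3) by auto
  define L where "L = sqrt u * exp ((1 - sqrt u) * (r / u)) / u"
  have L0: "L > 0" using u by (simp add: L_def)
  have "L \<le> (r / u)^k / fact k / u" unfolding L_def
    using divide_right_mono[OF _ less_imp_le[OF u(1)], of "sqrt u * exp ((1 - sqrt u) * (r / u))" "(r / u)^k / fact k"] k
    by simp
  also have "\<dots> \<le> opnorm (resolvent z r)" using opnorm_lower[OF assms(1,3)] u_def by simp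
  finally have LO: "L \<le> opnorm (resolvent z r)" .
  have UO: "opnorm (resolvent z r) \<le> exp (r / u) / u" using opnorm_upper(2)[OF assms(1,3)] u_def by simp
  have "ln L \<le> ln (opnorm (resolvent z r))" using LO L0 by simp
  moreover have "ln L = ln u / 2 + (1 - sqrt u) * (r / u) - ln u"
    using u by (simp add: L_def ln_div ln_mult ln_sqrt)
  ultimately have "u * (ln u / 2 + (1 - sqrt u) * (r / u) - ln u) \<le> u * ln (opnorm (resolvent z r))"
    using u by (intro mult_left_mono) auto
  moreover have "u * (ln u / 2 + (1 - sqrt u) * (r / u) - ln u) = (1 - sqrt u) * r - u / 2 * ln u"
    using u by (simp add: field_simps)
  ultimately show "(1 - sqrt (cmod z)) * r - cmod z / 2 * ln (cmod z) \<le> cmod z * ln (opnorm (resolvent z r))"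
    by (simp add: u_def)
  have "ln (opnorm (resolvent z r)) \<le> ln (exp (r / u) / u)" using UO LO L0 by simp
  also have "\<dots> = r / u - ln u" using u by (simp add: ln_div)
  finally have "u * ln (opnorm (resolvent z r)) \<le> u * (r / u - ln u)"
    using u by (intro mult_left_mono) auto
  also have "\<dots> = r - u * ln u" using u by (simp add: field_simps)
  finally show "cmod z * ln (opnorm (resolvent z r)) \<le> r - cmod z * ln (cmod z)"
    by (simp add: u_def)
qed

lemma cmod_at_right: "filterlim (\<lambda>z::complex. cmod z) (at_right 0) (at 0)"
  unfolding filterlim_at
proof
  show "\<forall>\<^sub>F z in at (0::complex). cmod z \<in> {0<..} \<and> cmod z \<noteq> 0"
    using eventually_at_topological by (auto simp: eventually_at_filter)
  show "((\<lambda>z::complex. cmod z) \<longlongrightarrow> 0) (at 0)"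
    by (rule tendsto_norm_zero[OF tendsto_ident_at])
qed

lemma scaled_limit:
  assumes "r \<ge> 0"
  shows "((\<lambda>z. cmod z * ln (opnorm (resolvent z r))) \<longlongrightarrow> r) (at (0::complex))"
proof (rule tendsto_sandwich)
  have l1: "((\<lambda>x::real. (1 - sqrt x) * r - x / 2 * ln x) \<longlongrightarrow> r) (at_right 0)"
    by real_asymp
  have l2: "((\<lambda>x::real. r - x * ln x) \<longlongrightarrow> r) (at_right 0)"
    by real_asymp
  show "((\<lambda>z. (1 - sqrt (cmod z)) * r - cmod z / 2 * ln (cmod z)) \<longlongrightarrow> r) (at (0::complex))"
    using filterlim_compose[OF l1 cmod_at_right] by simp
  show "((\<lambda>z. r - cmod z * ln (cmod z)) \<longlongrightarrow> r) (at (0::complex))"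
    using filterlim_compose[OF l2 cmod_at_right] by simp
  have ev: "\<forall>\<^sub>F z in at (0::complex). z \<noteq> 0 \<and> cmod z < 1"
    unfolding eventually_at by (intro exI[of _ 1]) (auto simp: dist_norm)
  show "\<forall>\<^sub>F z in at (0::complex). (1 - sqrt (cmod z)) * r - cmod z / 2 * ln (cmod z) \<le> cmod z * ln (opnorm (resolvent z r))"
    using ev by eventually_elim (use key_bounds(1) assms in auto)
  show "\<forall>\<^sub>F z in at (0::complex). cmod z * ln (opnorm (resolvent z r)) \<le> r - cmod z * ln (cmod z)"
    using ev by eventually_elim (use key_bounds(2) assms in auto)
qed

theorem lemma3p5:
  fixes r :: real
  assumes "r \<ge> 0"
  shows "((\<lambda>z. ln (opnorm (resolvent z r)) / ln (opnorm (resolvent z 1))) \<longlongrightarrow> r) (at (0::complex))"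
proof -
  have "((\<lambda>z. (cmod z * ln (opnorm (resolvent z r))) / (cmod z * ln (opnorm (resolvent z 1)))) \<longlongrightarrow> r / 1) (at (0::complex))"
    by (intro tendsto_divide scaled_limit assms) auto
  moreover have "\<forall>\<^sub>F z in at (0::complex). (cmod z * ln (opnorm (resolvent z r))) / (cmod z * ln (opnorm (resolvent z 1)))
      = ln (opnorm (resolvent z r)) / ln (opnorm (resolvent z 1))"
    unfolding eventually_at_filter by (intro always_eventually) auto
  ultimately show ?thesis by (simp add: tendsto_cong)
qed

end
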